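(* Under condition $\mathcal D'_{q_n}$, for every $\tau>0$, $$\lim_{n\to\infty}k_n\mathbb P(\mathscr W^c_{r_n}(U_n(\tau)))=\theta\tau\qquad\text{and}\qquad\lim_{n\to\infty}\frac{\mathbb P(\mathscr W^c_{r_n}(U_n(\tau)))}{r_n\mathbb P(U_n(\tau))}=\theta.$$
   Context: $\mathbf X_0,\mathbf X_1,\dots$ stationary in $\mathbb R^d$, coordinate process with shift $\sigma$. Thresholds $u_n$ nonincreasing, left-continuous, $\lim_{\tau_1\to0,\tau_2\to\infty}\mathbb P(u_n(\tau_2)<\|\mathbf X_0\|<u_n(\tau_1))=1$, $n\mathbb P(\|\mathbf X_0\|>u_n(\tau))\to\tau$; $u_n^{-1}(z)=\sup\{\tau>0:z\le u_n(\tau)\}$. Sequences $k_n,t_n\to\infty$, $r_n=\lfloor n/k_n\rfloor\to\infty$, $k_nt_n=o(n)$, $q_n=o(r_n)$. $U_n(\tau)=\{\|\mathbf X_0\|>u_n(\tau)\}$, $U_n^{(q_n)}(\tau)=U_n(\tau)\cap\bigcap_{i=1}^{q_n}\{\|\mathbf X_i\|\le u_n(\tau)\}$; $\mathscr W^c_{r}(U_n(\tau))=\bigcup_{i=0}^{r-1}\sigma^{-i}(U_n(\tau))=\{\max_{0\le i<r}\|\mathbf X_i\|>u_n(\tau)\}$. Standing assumption (extremal index): $\theta=\lim_n\mathbb P(U_n^{(q_n)}(\tau))/\mathbb P(U_n(\tau))$ exists for all $\tau>0$. Condition $\mathcal D'_{q_n}$: for every set $A_1=\{(x_j):x_j\in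 H_j,\ j=0,\dots,m\}$ ($H_j$ Borel), with $A_{n,1}=\{(u_n^{-1}(\|\mathbf X_j\|)\mathbf X_j/\|\mathbf X_j\|)_{j\ge0}\in A_1\}$, $A^{(q)}=A\cap\bigcap_{i=1}^q\sigma^{-i}(A^c)$, $\mathscr W^c_{[a,b)}(A)=\bigcup_{a\le i<b}\sigma^{-i}(A)$: $\lim_nn\mathbb P(A^{(q_n)}_{n,1}\cap\mathscr W^c_{[q_n+1,r_n)}(A_{n,1}))=0$. *)

theory Defs
  imports "HOL-Probability.Probability" "HOL-Library.Landau_Symbols"
begin

text \<open>Coordinate process on the sequence space (nat => 'a); X_i(w) = w i.\<close>

definition shift :: "(nat \<Rightarrow> 'a) \<Rightarrow> nat \<Rightarrow> 'a" where
  "shift w = (\<lambda>i. w (Suc i))"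

text \<open>Generalised inverse u^{-1}(z) = sup {t > 0. z <= u(t)} (computed in the extended
  reals; the value +infinity and sup of the empty set are sent to 0).\<close>
definition uinv :: "(real \<Rightarrow> real) \<Rightarrow> real \<Rightarrow> real" where
  "uinv v z = real_of_ereal (Sup (ereal ` {t. 0 < t \<and> z \<le> v t}))"

definition exceed :: "real \<Rightarrow> (nat \<Rightarrow> 'a::real_normed_vector) set" where
  "exceed x = {w. x < norm (w 0)}"

definition exceed_q :: "real \<Rightarrow> nat \<Rightarrow> (nat \<Rightarrow> 'a::real_normed_vector) set" where
  "exceed_q x q = exceed x \<inter> (\<Inter>i\<in>{1..q}. {w. norm (w i) \<le> x})"

definition Wmax :: "nat \<Rightarrow> real \<Rightarrow> (nat \<Rightarrow> 'a::real_normed_vector) set" where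
  "Wmax r x = {w. \<exists>i<r. x < norm (w i)}"

definition Aq :: "(nat \<Rightarrow> 'a) set \<Rightarrow> nat \<Rightarrow> (nat \<Rightarrow> 'a) set" where
  "Aq A q = A \<inter> (\<Inter>i\<in>{1..q}. (shift ^^ i) -` (- A))"

definition Wint :: "nat \<Rightarrow> nat \<Rightarrow> (nat \<Rightarrow> 'a) set \<Rightarrow> (nat \<Rightarrow> 'a) set" where
  "Wint a b A = (\<Union>i\<in>{a..<b}. (shift ^^ i) -` A)"

definition normalise :: "(real \<Rightarrow> real) \<Rightarrow> 'a::real_normed_vector \<Rightarrow> 'a" where
  "normalise v x = (uinv v (norm x) / norm x) *\<^sub>R x"

definition An1 :: "(real \<Rightarrow> real) \<Rightarrow> nat \<Rightarrow> (nat \<Rightarrow> 'a::real_normed_vector set)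
    \<Rightarrow> (nat \<Rightarrow> 'a) set" where
  "An1 v m H = {w. \<forall>j\<le>m. normalise v (w j) \<in> H j}"

definition cond_D' :: "(nat \<Rightarrow> 'a::euclidean_space) measure \<Rightarrow> (nat \<Rightarrow> real \<Rightarrow> real)
    \<Rightarrow> (nat \<Rightarrow> nat) \<Rightarrow> (nat \<Rightarrow> nat) \<Rightarrow> bool" where
  "cond_D' M u q r \<longleftrightarrow>
     (\<forall>(m::nat) (H :: nat \<Rightarrow> 'a set). (\<forall>j\<le>m. H j \<in> sets borel) \<longrightarrow>
        (\<lambda>n. real n * measure M (Aq (An1 (u n) m H) (q n) \<inter>
                                 Wint (q n + 1) (r n) (An1 (u n) m H))) \<longlonglongrightarrow> 0)"

end

theory Submission
  imports Defs
begin

lemma shift_pow: "(shift ^^ i) w j = w (j + i)"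
  by (induction i arbitrary: w j) (auto simp: shift_def)

lemma uinv_nonneg: "0 \<le> uinv v z"
proof (cases "{t. 0 < t \<and> z \<le> v t} = {}")
  case True then show ?thesis unfolding uinv_def True by (simp add: bot_ereal_def)
next
  case False
  then obtain t0 where "0 < t0" "z \<le> v t0" by auto
  then have "ereal t0 \<le> Sup (ereal ` {t. 0 < t \<and> z \<le> v t})"
    by (intro Sup_upper) auto
  then have "0 \<le> Sup (ereal ` {t. 0 < t \<and> z \<le> v t})" using \<open>0 < t0\<close>
    by (meson dual_order.trans ereal_less_eq(5) less_eq_real_def)
  then show ?thesis unfolding uinv_def by (rule real_of_ereal_pos)
qed

lemma uinv_anti_g:
  fixes v :: "real \<Rightarrow> real"
  shows "z \<le> z' \<Longrightarrow> Sup (ereal ` {t. 0 < t \<and> z' \<le> v t}) \<le> Sup (ereal ` {t. 0 < t \<and> z \<le> v t})"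
  by (intro Sup_subset_mono image_mono) auto

lemma real_of_ereal_pos_cases:
  assumes "0 < real_of_ereal e" obtains r where "e = ereal r" "r = real_of_ereal e"
  using assms by (cases e) auto

lemma uinv_interval: "is_interval {z. 0 < uinv v z \<and> uinv v z < c}"
  unfolding is_interval_1
proof (intro ballI allI impI)
  fix a b x
  assume a: "a \<in> {z. 0 < uinv v z \<and> uinv v z < c}" and b: "b \<in> {z. 0 < uinv v z \<and> uinv v z < c}"
    and x: "a \<le> x \<and> x \<le> b"
  define G where "G z = Sup (ereal ` {t. 0 < t \<and> z \<le> v t})" for z
  have u: "uinv v z = real_of_ereal (G z)" for z unfolding uinv_def G_def ..
  obtain ra where ra: "G a = ereal ra" "0 < ra" "ra < c" using a u real_of_ereal_pos_cases[of "G a"] by auto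
  obtain rb where rb: "G b = ereal rb" "0 < rb" "rb < c" using b u real_of_ereal_pos_cases[of "G b"] by auto
  have "G b \<le> G x" "G x \<le> G a" using x uinv_anti_g unfolding G_def by auto
  then obtain r where "G x = ereal r" "rb \<le> r" "r \<le> ra" using ra rb by (cases "G x") auto
  then show "x \<in> {z. 0 < uinv v z \<and> uinv v z < c}" using u ra rb by auto
qed

lemma uinv_lt:
  assumes anti: "\<forall>s s'. 0 < s \<longrightarrow> s \<le> s' \<longrightarrow> v s' \<le> v s"
    and lc: "\<forall>s. 0 < s \<longrightarrow> continuous (at_left s) v"
    and tau: "0 < \<tau>" and z: "v \<tau> < z" and t0: "0 < t0" "z \<le> v t0"
  shows "0 < uinv v z \<and> uinv v z < \<tau>"
proof -
  define S where "S = {t. 0 < t \<and> z \<le> v t}"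
  define G where "G = Sup (ereal ` S)"
  have Ssub: "t < \<tau>" if "t \<in> S" for t
  proof (rule ccontr)
    assume "\<not> t < \<tau>"
    then have "v t \<le> v \<tau>" using anti tau by auto
    then show False using that z unfolding S_def by auto
  qed
  have Gle: "G \<le> ereal \<tau>" unfolding G_def by (intro Sup_least) (auto dest: Ssub)
  have Gge: "ereal t0 \<le> G" unfolding G_def S_def using t0 by (intro Sup_upper) auto
  have Gne: "G \<noteq> ereal \<tau>"
  proof
    assume GT: "G = ereal \<tau>"
    have low: "z \<le> v t" if "0 < t" "t < \<tau>" for t
    proof -
      have "ereal t < G" using GT that by simp
      then obtain s where "s \<in> S" "ereal t < ereal s" unfolding G_def by (auto simp: less_Sup_iff)
      then have "t < s" "z \<le> v s" unfolding S_def by auto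
      then have "v s \<le> v t" using anti that by auto
      then show ?thesis using \<open>z \<le> v s\<close> by simp
    qed
    have "(v \<longlongrightarrow> v \<tau>) (at_left \<tau>)" using lc tau by (simp add: continuous_within)
    moreover have "eventually (\<lambda>t. z \<le> v t) (at_left \<tau>)"
      using eventually_at_left_real[of 0 \<tau>] tau
      by (auto elim!: eventually_mono intro: low)
    ultimately have "z \<le> v \<tau>" by (intro tendsto_lowerbound) auto
    then show False using z by simp
  qed
  obtain r where r: "G = ereal r" "t0 \<le> r" "r < \<tau>" using Gle Gge Gne by (cases G) auto
  then show ?thesis unfolding uinv_def using t0 by (simp add: S_def[symmetric] G_def[symmetric])
qed

lemma uinv_ge:
  assumes tau: "0 < \<tau>" and z: "z \<le> v \<tau>" and B: "\<forall>t. 0 < t \<and> z \<le> v t \<longrightarrow> t \<le> B"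
  shows "\<tau> \<le> uinv v z"
proof -
  define G where "G = Sup (ereal ` {t. 0 < t \<and> z \<le> v t})"
  have Gle: "G \<le> ereal B" unfolding G_def using B by (intro Sup_least) auto
  have Gge: "ereal \<tau> \<le> G" unfolding G_def using tau z by (intro Sup_upper) auto
  obtain r where r: "G = ereal r" "\<tau> \<le> r" using Gle Gge by (cases G) auto
  then show ?thesis unfolding uinv_def by (simp add: G_def[symmetric])
qed

lemma normalise_zero[simp]: "normalise v 0 = 0"
  by (simp add: normalise_def)

lemma norm_normalise: "norm (normalise v x) = (if x = 0 then 0 else uinv v (norm x))"
  by (simp add: normalise_def uinv_nonneg)

lemma key_point:
  fixes x :: "'a::real_normed_vector"
  assumes anti: "\<forall>s s'. 0 < s \<longrightarrow> s \<le> s' \<longrightarrow> v s' \<le> v s"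
    and lc: "\<forall>s. 0 < s \<longrightarrow> continuous (at_left s) v"
    and tau: "0 < \<tau>"
    and c1: "\<not> (\<forall>m::nat. v (1 / (real m + 1)) < norm x)"
    and c2: "\<not> (\<forall>m::nat. norm x \<le> v (real m + 1))"
    and c3: "\<not> (x = 0 \<and> v \<tau> < 0)"
  shows "(v \<tau> < norm x) \<longleftrightarrow> normalise v x \<in> {y. 0 < norm y \<and> norm y < \<tau>}"
proof (cases "v \<tau> < norm x")
  case True
  then have x0: "x \<noteq> 0" using c3 by auto
  obtain m :: nat where m: "norm x \<le> v (1 / (real m + 1))" using c1 by (auto simp: not_less)
  have "0 < uinv v (norm x) \<and> uinv v (norm x) < \<tau>"
    by (rule uinv_lt[OF anti lc tau True _ m]) simp
  moreover have "norm (normalise v x) = uinv v (norm x)" using x0 by (simp add: norm_normalise)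
  ultimately have "0 < norm (normalise v x) \<and> norm (normalise v x) < \<tau>" by simp
  then show ?thesis using True by blast
next
  case False
  obtain m :: nat where m: "v (real m + 1) < norm x" using c2 by (auto simp: not_le)
  have B: "\<forall>t. 0 < t \<and> norm x \<le> v t \<longrightarrow> t \<le> real m + 1"
  proof (intro allI impI)
    fix t assume t: "0 < t \<and> norm x \<le> v t"
    show "t \<le> real m + 1"
    proof (rule ccontr)
      assume "\<not> t \<le> real m + 1"
      then have "v t \<le> v (real m + 1)" using anti by auto
      then show False using t m by auto
    qed
  qed
  have "\<tau> \<le> uinv v (norm x)" using False by (intro uinv_ge[OF tau _ B]) auto
  then show ?thesis using False by (auto simp: norm_normalise)
qed

locale stat = prob_space M for M :: "(nat \<Rightarrow> 'a::euclidean_space) measure" +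
  assumes sets_M: "sets M = sets (\<Pi>\<^sub>M i\<in>(UNIV::nat set). (borel :: 'a measure))"
    and stationary: "\<forall>A\<in>sets M. measure M (shift -` A \<inter> space M) = measure M A"
begin

lemma space_eq: "space M = UNIV"
  using sets_eq_imp_space_eq[OF sets_M] by (simp add: space_PiM)

lemma comp_meas[measurable]: "(\<lambda>w. w i) \<in> borel_measurable M"
  using measurable_component_singleton[of i UNIV "\<lambda>_. borel"]
  by (simp add: measurable_cong_sets[OF sets_M refl])

lemma shift_meas[measurable]: "shift \<in> measurable M M"
proof -
  have "(\<lambda>w i. w (Suc i)) \<in> measurable M (\<Pi>\<^sub>M i\<in>(UNIV::nat set). (borel :: 'a measure))"
    by (rule measurable_PiM_single') (auto simp: space_eq)
  then show ?thesis unfolding shift_def[abs_def]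
    by (simp add: measurable_cong_sets[OF refl sets_M])
qed

lemma sets_pred: "Measurable.pred M P \<Longrightarrow> {w. P w} \<in> sets M"
  by (simp add: Measurable.pred_def space_eq)

lemma stat_pow: "A \<in> sets M \<Longrightarrow> measure M ((shift ^^ i) -` A) = measure M A"
proof (induction i arbitrary: A)
  case (Suc i)
  have s: "shift -` A \<in> sets M"
    using measurable_sets[OF shift_meas Suc.prems] space_eq by simp
  have "(shift ^^ Suc i) -` A = (shift ^^ i) -` (shift -` A)"
    by (simp add: vimage_comp)
  then have "measure M ((shift ^^ Suc i) -` A) = measure M (shift -` A)"
    by (simp only: Suc.IH[OF s])
  also have "\<dots> = measure M A" using stationary Suc.prems space_eq by simp
  finally show ?case .
qed simp

lemma null_coord:
  assumes B: "B \<in> sets borel" and z: "measure M {w. w 0 \<in> B} = 0"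
  shows "AE w in M. w i \<notin> B"
proof -
  have e: "{w. w i \<in> B} = (shift ^^ i) -` {w. w 0 \<in> B}"
    by (auto simp: shift_pow)
  have m0: "{w. w 0 \<in> B} \<in> sets M" using measurable_sets[OF comp_meas B] space_eq by (simp add: vimage_def)
  have mi: "{w. w i \<in> B} \<in> sets M" using measurable_sets[OF comp_meas B] space_eq by (simp add: vimage_def)
  have "measure M {w. w i \<in> B} = 0" using e stat_pow[OF m0, of i] z by simp
  then show ?thesis
    using mi by (subst AE_iff_measurable[of "{w. w i \<in> B}"]) (auto simp: space_eq emeasure_eq_measure)
qed

lemma meas_exceed_q: "exceed_q x m \<in> sets M"
proof -
  have "exceed_q x m = {w. x < norm (w 0) \<and> (\<forall>i. i \<in> {1..m} \<longrightarrow> norm (w i) \<le> x)}"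
    by (auto simp: exceed_q_def exceed_def)
  also have "\<dots> \<in> sets M" by (intro sets_pred) measurable
  finally show ?thesis .
qed

lemma meas_exceed: "exceed x \<in> sets M"
proof -
  have "exceed x = {w. x < norm (w 0)}" by (auto simp: exceed_def)
  also have "\<dots> \<in> sets M" by (intro sets_pred) measurable
  finally show ?thesis .
qed

lemma meas_Wmax: "Wmax r x \<in> sets M"
proof -
  have "Wmax r x = {w. \<exists>i. i < r \<and> x < norm (w i)}" by (auto simp: Wmax_def)
  also have "\<dots> \<in> sets M" by (intro sets_pred) measurable
  finally show ?thesis .
qed

lemma Wmax_decomp: "measure M (Wmax r x) = (\<Sum>m<r. measure M (exceed_q x m))"
proof (induction r)
  case 0 then show ?case by (simp add: Wmax_def)
next
  case (Suc r)
  have e: "Wmax (Suc r) x = exceed_q x r \<union> shift -` Wmax r x"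
  proof (intro equalityI subsetI)
    fix w assume "w \<in> Wmax (Suc r) x"
    then obtain i where i: "i < Suc r" "x < norm (w i)" by (auto simp: Wmax_def)
    show "w \<in> exceed_q x r \<union> shift -` Wmax r x"
    proof (cases "w \<in> exceed_q x r")
      case False
      then have "\<exists>j. j < r \<and> x < norm (w (Suc j))"
      proof (cases "x < norm (w 0)")
        case True
        with False obtain j where "j \<in> {1..r}" "x < norm (w j)"
          by (auto simp: exceed_q_def exceed_def not_le)
        then show ?thesis by (intro exI[of _ "j - 1"]) auto
      next
        case False
        then have "i \<noteq> 0" using i by (metis gr0I)
        then show ?thesis using i by (intro exI[of _ "i - 1"]) auto
      qed
      then show ?thesis by (auto simp: Wmax_def shift_def)
    qed simp
  next
    fix w assume "w \<in> exceed_q x r \<union> shift -` Wmax r x"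
    then show "w \<in> Wmax (Suc r) x"
      by (auto simp: Wmax_def exceed_q_def exceed_def shift_def)
  qed
  have d: "exceed_q x r \<inter> shift -` Wmax r x = {}"
    apply (auto simp: Wmax_def exceed_q_def exceed_def shift_def)
    subgoal for w i by (drule bspec[of _ _ "Suc i"]) auto
    done
  have ms: "shift -` Wmax r x \<in> sets M"
    using measurable_sets[OF shift_meas meas_Wmax] space_eq by simp
  have "measure M (Wmax (Suc r) x) = measure M (exceed_q x r) + measure M (shift -` Wmax r x)"
    unfolding e by (rule finite_measure_Union[OF meas_exceed_q ms d])
  also have "measure M (shift -` Wmax r x) = measure M (Wmax r x)"
    using stationary meas_Wmax space_eq by simp
  finally show ?case using Suc.IH by simp
qed

lemma null_from_mid:
  fixes v :: "real \<Rightarrow> real" and C :: "'a set"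
  assumes C: "C \<in> sets borel"
    and mid: "\<And>e. 0 < e \<Longrightarrow> \<exists>s1 s2. measure M {w. v s2 < norm (w 0) \<and> norm (w 0) < v s1} > 1 - e
                 \<and> (\<forall>y\<in>C. \<not> (v s2 < norm y \<and> norm y < v s1))"
  shows "AE w in M. w i \<notin> C"
proof (rule null_coord[OF C])
  have mC: "{w. w 0 \<in> C} \<in> sets M" using measurable_sets[OF comp_meas C] space_eq by (simp add: vimage_def)
  have "measure M {w. w 0 \<in> C} \<le> e" if e: "0 < e" for e
  proof -
    obtain s1 s2 where s: "measure M {w. v s2 < norm (w 0) \<and> norm (w 0) < v s1} > 1 - e"
      "\<forall>y\<in>C. \<not> (v s2 < norm y \<and> norm y < v s1)" using mid[OF e] by blast
    define Mi where "Mi = {w::nat\<Rightarrow>'a. v s2 < norm (w 0) \<and> norm (w 0) < v s1}"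
    have mMi: "Mi \<in> sets M" unfolding Mi_def by (intro sets_pred) measurable
    have "{w. w 0 \<in> C} \<subseteq> space M - Mi" using s(2) unfolding Mi_def space_eq by auto
    then have "measure M {w. w 0 \<in> C} \<le> measure M (space M - Mi)"
      by (intro finite_measure_mono) (auto simp: mMi)
    also have "\<dots> = 1 - measure M Mi" using finite_measure_compl[OF mMi] prob_space by simp
    finally show ?thesis using s(1) unfolding Mi_def by simp
  qed
  then show "measure M {w. w 0 \<in> C} = 0"
    by (metis measure_nonneg field_le_epsilon order_antisym add_0)
qed

lemma mid_pairs:
  fixes v :: "real \<Rightarrow> real"
  assumes full: "((\<lambda>(s1, s2). measure M {w. v s2 < norm (w 0) \<and> norm (w 0) < v s1}) \<longlongrightarrow> 1)
                  (at_right 0 \<times>\<^sub>F at_top)" and e: "0 < e"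
  obtains b N where "0 < b" "\<And>s1 s2. 0 < s1 \<Longrightarrow> s1 < b \<Longrightarrow> N \<le> s2 \<Longrightarrow>
     measure M {w. v s2 < norm (w 0) \<and> norm (w 0) < v s1} > 1 - e"
proof -
  have "eventually (\<lambda>p. 1 - e < (\<lambda>(s1, s2). measure M {w. v s2 < norm (w 0) \<and> norm (w 0) < v s1}) p)
          (at_right 0 \<times>\<^sub>F at_top)"
    using order_tendstoD(1)[OF full] e by simp
  then obtain Pf Pg where P: "eventually Pf (at_right (0::real))" "eventually Pg (at_top::real filter)"
    "\<forall>x y. Pf x \<longrightarrow> Pg y \<longrightarrow> 1 - e < measure M {w. v y < norm (w 0) \<and> norm (w 0) < v x}"
    unfolding eventually_prod_filter by auto
  obtain b where b: "0 < b" "\<forall>y>0. y < b \<longrightarrow> Pf y" using P(1) unfolding eventually_at_right_field by auto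
  obtain N where N: "\<forall>n\<ge>N. Pg n" using P(2) unfolding eventually_at_top_linorder by auto
  show ?thesis using b N P(3) by (intro that[of b N]) auto
qed

lemma coord_equiv:
  fixes v :: "real \<Rightarrow> real"
  assumes anti: "\<forall>s s'. 0 < s \<longrightarrow> s \<le> s' \<longrightarrow> v s' \<le> v s"
    and lc: "\<forall>s. 0 < s \<longrightarrow> continuous (at_left s) v"
    and full: "((\<lambda>(s1, s2). measure M {w. v s2 < norm (w 0) \<and> norm (w 0) < v s1}) \<longlongrightarrow> 1)
                  (at_right 0 \<times>\<^sub>F at_top)"
    and tau: "0 < \<tau>"
    and c3: "AE w in M. \<forall>i. \<not> (w i = 0 \<and> v \<tau> < 0)"
  shows "AE w in M. \<forall>i. (v \<tau> < norm (w i) \<longleftrightarrow> normalise v (w i) \<in> {y. 0 < norm y \<and> norm y < \<tau>})"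
proof -
  define C1 where "C1 = {y::'a. \<forall>m::nat. v (1 / (real m + 1)) < norm y}"
  define C2 where "C2 = {y::'a. \<forall>m::nat. norm y \<le> v (real m + 1)}"
  have "Measurable.pred borel (\<lambda>y::'a. \<forall>m::nat. v (1 / (real m + 1)) < norm y)" by measurable
  then have C1m: "C1 \<in> sets borel" unfolding C1_def Measurable.pred_def by simp
  have "Measurable.pred borel (\<lambda>y::'a. \<forall>m::nat. norm y \<le> v (real m + 1))" by measurable
  then have C2m: "C2 \<in> sets borel" unfolding C2_def Measurable.pred_def by simp
  have a1: "AE w in M. w i \<notin> C1" for i
  proof (rule null_from_mid[OF C1m])
    fix e :: real assume e: "0 < e"
    obtain b N where bN: "0 < b" "\<And>s1 s2. 0 < s1 \<Longrightarrow> s1 < b \<Longrightarrow> N \<le> s2 \<Longrightarrow>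
       measure M {w. v s2 < norm (w 0) \<and> norm (w 0) < v s1} > 1 - e" using mid_pairs[OF full e] by blast
    obtain m where m: "inverse (real (Suc m)) < b" using reals_Archimedean[OF bN(1)] by blast
    have "measure M {w. v N < norm (w 0) \<and> norm (w 0) < v (1 / (real m + 1))} > 1 - e"
      using m by (intro bN(2)) (auto simp: field_simps)
    moreover have "\<forall>y\<in>C1. \<not> (v N < norm y \<and> norm y < v (1 / (real m + 1)))"
      unfolding C1_def by (auto simp: not_less less_imp_le)
    ultimately show "\<exists>s1 s2. measure M {w. v s2 < norm (w 0) \<and> norm (w 0) < v s1} > 1 - e
                 \<and> (\<forall>y\<in>C1. \<not> (v s2 < norm y \<and> norm y < v s1))" by blast
  qed
  have a2: "AE w in M. w i \<notin> C2" for i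
  proof (rule null_from_mid[OF C2m])
    fix e :: real assume e: "0 < e"
    obtain b N where bN: "0 < b" "\<And>s1 s2. 0 < s1 \<Longrightarrow> s1 < b \<Longrightarrow> N \<le> s2 \<Longrightarrow>
       measure M {w. v s2 < norm (w 0) \<and> norm (w 0) < v s1} > 1 - e" using mid_pairs[OF full e] by blast
    define m where "m = nat \<lceil>N\<rceil>"
    have "N \<le> real m + 1" unfolding m_def by linarith
    then have "measure M {w. v (real m + 1) < norm (w 0) \<and> norm (w 0) < v (b / 2)} > 1 - e"
      using bN by (intro bN(2)) auto
    moreover have "\<forall>y\<in>C2. \<not> (v (real m + 1) < norm y \<and> norm y < v (b / 2))"
      unfolding C2_def by (auto simp: not_less)
    ultimately show "\<exists>s1 s2. measure M {w. v s2 < norm (w 0) \<and> norm (w 0) < v s1} > 1 - e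
                 \<and> (\<forall>y\<in>C2. \<not> (v s2 < norm y \<and> norm y < v s1))" by blast
  qed
  have "AE w in M. \<forall>i. w i \<notin> C1" using a1 by (simp add: AE_all_countable)
  moreover have "AE w in M. \<forall>i. w i \<notin> C2" using a2 by (simp add: AE_all_countable)
  ultimately show ?thesis using c3
  proof eventually_elim
    case (elim w)
    show ?case
    proof
      fix i
      show "(v \<tau> < norm (w i) \<longleftrightarrow> normalise v (w i) \<in> {y. 0 < norm y \<and> norm y < \<tau>})"
        using elim by (intro key_point[OF anti lc tau]) (auto simp: C1_def C2_def)
    qed
  qed
qed

end

context stat begin
lemma block_bound:
  assumes qr: "qq < rr"
  shows "\<bar>measure M (Wmax rr y) - real rr * measure M (exceed_q y qq)\<bar>
     \<le> real qq * measure M (exceed y) + real rr * measure M {w. y < norm (w 0) \<and> (\<forall>i\<in>{1..qq}. \<not> y < norm (w i))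
                           \<and> (\<exists>i\<in>{qq + 1..<rr}. y < norm (w i))}"
proof -
  define E where "E = {w::nat\<Rightarrow>'a. y < norm (w 0) \<and> (\<forall>i\<in>{1..qq}. \<not> y < norm (w i))
                           \<and> (\<exists>i\<in>{qq + 1..<rr}. y < norm (w i))}"
  have Em: "E \<in> sets M" unfolding E_def by (intro sets_pred) measurable
  define Q where "Q = measure M (exceed_q y qq)"
  define U where "U = measure M (exceed y)"
  have eqsub: "exceed_q y m \<subseteq> exceed y" for m by (auto simp: exceed_q_def)
  have QU: "Q \<le> U" unfolding Q_def U_def by (intro finite_measure_mono[OF eqsub meas_exceed])
  have t: "\<bar>measure M (exceed_q y m) - Q\<bar> \<le> (if m < qq then U else 0) + measure M E" if m: "m < rr" for m
  proof (cases "m < qq")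
    case True
    have "measure M (exceed_q y m) \<le> U" unfolding U_def by (intro finite_measure_mono[OF eqsub meas_exceed])
    moreover have "0 \<le> measure M (exceed_q y m)" "0 \<le> Q" "0 \<le> measure M E" by (simp_all add: Q_def)
    moreover have h: "(if m < qq then U else 0) = U" using True by simp
    ultimately show ?thesis using QU unfolding h abs_le_iff by linarith
  next
    case False
    have s1: "exceed_q y m \<subseteq> exceed_q y qq" using False by (auto simp: exceed_q_def)
    have s2: "exceed_q y qq \<subseteq> exceed_q y m \<union> E"
    proof
      fix w :: "nat \<Rightarrow> 'a" assume w: "w \<in> exceed_q y qq"
      show "w \<in> exceed_q y m \<union> E"
      proof (cases "w \<in> exceed_q y m")
        case False
        then obtain i where i: "i \<in> {1..m}" "y < norm (w i)" using w by (auto simp: exceed_q_def exceed_def not_le)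
        then have "i \<notin> {1..qq}" using w by (force simp: exceed_q_def)
        then have "i \<in> {qq + 1..<rr}" using i m by auto
        then show ?thesis using w i by (auto simp: E_def exceed_q_def exceed_def)
      qed simp
    qed
    have "measure M (exceed_q y m) \<le> Q" unfolding Q_def by (intro finite_measure_mono[OF s1 meas_exceed_q])
    moreover have "Q \<le> measure M (exceed_q y m \<union> E)" unfolding Q_def
      by (intro finite_measure_mono[OF s2] sets.Un meas_exceed_q Em)
    moreover have "measure M (exceed_q y m \<union> E) \<le> measure M (exceed_q y m) + measure M E"
      by (intro measure_Un_le meas_exceed_q Em)
    ultimately show ?thesis using False by auto
  qed
  have "measure M (Wmax rr y) - real rr * Q = (\<Sum>m<rr. measure M (exceed_q y m) - Q)"
    by (simp add: Wmax_decomp sum_subtractf)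
  then have "\<bar>measure M (Wmax rr y) - real rr * Q\<bar> \<le> (\<Sum>m<rr. \<bar>measure M (exceed_q y m) - Q\<bar>)"
    by (simp add: sum_abs)
  also have "\<dots> \<le> (\<Sum>m<rr. (if m < qq then U else 0) + measure M E)"
    by (intro sum_mono t) auto
  also have "\<dots> = (\<Sum>m<rr. (if m < qq then U else 0)) + real rr * measure M E"
    by (simp add: sum.distrib)
  also have "(\<Sum>m<rr. (if m < qq then U else 0)) = real qq * U"
  proof -
    have "{..<rr} \<inter> {m. m < qq} = {..<qq}" using qr by auto
    then show ?thesis by (simp add: sum.If_cases)
  qed
  finally show ?thesis unfolding E_def Q_def U_def .
qed
end

context stat begin

lemma main:
  fixes u :: "nat \<Rightarrow> real \<Rightarrow> real"
    and k t q :: "nat \<Rightarrow> nat"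
    and \<theta> :: real
  assumes u_antimono: "\<forall>n s s'. 0 < s \<longrightarrow> s \<le> s' \<longrightarrow> u n s' \<le> u n s"
    and u_leftcont: "\<forall>n s. 0 < s \<longrightarrow> continuous (at_left s) (u n)"
    and u_full: "\<forall>n. ((\<lambda>(s1, s2). measure M {w. u n s2 < norm (w 0) \<and> norm (w 0) < u n s1})
                    \<longlongrightarrow> 1) (at_right 0 \<times>\<^sub>F at_top)"
    and u_norm: "\<forall>s>0. (\<lambda>n. real n * measure M (exceed (u n s))) \<longlonglongrightarrow> s"
    and k_lim: "filterlim k at_top sequentially"
    and t_lim: "filterlim t at_top sequentially"
    and r_lim: "filterlim (\<lambda>n. n div k n) at_top sequentially"
    and kt_small: "(\<lambda>n. real (k n * t n)) \<in> o(\<lambda>n. real n)"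
    and q_small: "(\<lambda>n. real (q n)) \<in> o(\<lambda>n. real (n div k n))"
    and extremal_index: "\<forall>s>0. (\<lambda>n. measure M (exceed_q (u n s) (q n)) / measure M (exceed (u n s)))
                             \<longlonglongrightarrow> \<theta>"
    and D': "cond_D' M u q (\<lambda>n. n div k n)"
    and tau: "0 < \<tau>"
  shows "(\<lambda>n. real (k n) * measure M (Wmax (n div k n) (u n \<tau>))) \<longlonglongrightarrow> \<theta> * \<tau>
       \<and> (\<lambda>n. measure M (Wmax (n div k n) (u n \<tau>))
               / (real (n div k n) * measure M (exceed (u n \<tau>)))) \<longlonglongrightarrow> \<theta>"
proof -
  define r where "r n = n div k n" for n
  define x where "x n = u n \<tau>" for n
  define U where "U n = measure M (exceed (x n))" for n
  define Q where "Q n = measure M (exceed_q (x n) (q n))" for n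
  define W where "W n = measure M (Wmax (r n) (x n))" for n
  define DE where "DE n = {w::nat\<Rightarrow>'a. x n < norm (w 0) \<and> (\<forall>i\<in>{1..q n}. \<not> x n < norm (w i))
                           \<and> (\<exists>i\<in>{q n + 1..<r n}. x n < norm (w i))}" for n
  define D where "D n = measure M (DE n)" for n
  define Hs where "Hs = {y::'a. 0 < norm y \<and> norm y < \<tau>}"
  have L1: "(\<lambda>n. real n * U n) \<longlonglongrightarrow> \<tau>" using u_norm tau unfolding U_def x_def by simp
  have L2: "(\<lambda>n. Q n / U n) \<longlonglongrightarrow> \<theta>" using extremal_index tau unfolding U_def Q_def x_def by simp
  have Upos: "eventually (\<lambda>n. 0 < U n) sequentially"
  proof -
    have "eventually (\<lambda>n. 0 < real n * U n) sequentially" using order_tendstoD(1)[OF L1 tau] .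
    then show ?thesis by eventually_elim (auto simp: zero_less_mult_iff)
  qed
  have U0: "U \<longlonglongrightarrow> 0"
  proof -
    have "(\<lambda>n. real n * U n * inverse (real n)) \<longlonglongrightarrow> \<tau> * 0"
      by (intro tendsto_mult L1 lim_inverse_n)
    moreover have "eventually (\<lambda>n. real n * U n * inverse (real n) = U n) sequentially"
      using eventually_gt_at_top[of 0] by eventually_elim auto
    ultimately show ?thesis by (simp add: Lim_transform_eventually)
  qed
  have c3: "eventually (\<lambda>n. AE w in M. \<forall>i. \<not> (w i = 0 \<and> u n \<tau> < 0)) sequentially"
  proof (cases "measure M {w. w 0 \<in> {0}} = 0")
    case True
    have "AE w in M. w i \<notin> {0}" for i by (rule null_coord[OF _ True]) simp
    then have A0: "AE w in M. \<forall>i. w i \<notin> {0}" by (simp add: AE_all_countable)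
    have "AE w in M. \<forall>i. \<not> (w i = 0 \<and> u n \<tau> < 0)" for n
      by (rule eventually_mono[OF A0]) auto
    then show ?thesis by simp
  next
    case False
    then have p: "0 < measure M {w. w 0 \<in> {0}}" using measure_nonneg[of M "{w. w 0 \<in> {0}}"] by linarith
    have "eventually (\<lambda>n. U n < measure M {w. w 0 \<in> {0}}) sequentially"
      using order_tendstoD(2)[OF U0 p] .
    then show ?thesis
    proof eventually_elim
      case (elim n)
      have "0 \<le> u n \<tau>"
      proof (rule ccontr)
        assume "\<not> 0 \<le> u n \<tau>"
        then have "{w. w 0 \<in> {0}} \<subseteq> exceed (x n)" by (auto simp: exceed_def x_def)
        then have "measure M {w. w 0 \<in> {0}} \<le> U n" unfolding U_def
          by (intro finite_measure_mono meas_exceed)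
        then show False using elim by simp
      qed
      then show ?case by auto
    qed
  qed
  have equiv: "eventually (\<lambda>n. AE w in M. \<forall>i. (x n < norm (w i) \<longleftrightarrow> normalise (u n) (w i) \<in> Hs)) sequentially"
    using c3
  proof eventually_elim
    case (elim n)
    show ?case unfolding x_def Hs_def
      using u_antimono u_leftcont u_full elim by (intro coord_equiv tau) auto
  qed

  text \<open>Step A: D' transfers to the exceedance version\<close>
  have "Measurable.pred borel (\<lambda>y::'a. 0 < norm y \<and> norm y < \<tau>)" by measurable
  then have Hs_borel: "Hs \<in> sets borel" unfolding Hs_def Measurable.pred_def by simp
  have AH_borel: "{y. normalise (u n) y \<in> Hs} \<in> sets borel" for n
  proof -
    define I where "I = {z. 0 < uinv (u n) z \<and> uinv (u n) z < \<tau>}"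
    have I: "I \<in> sets borel" unfolding I_def by (intro real_interval_borel_measurable uinv_interval)
    have "{y. normalise (u n) y \<in> Hs} = (norm -` I \<inter> space borel) - {0}"
      unfolding Hs_def I_def by (auto simp del: zero_less_norm_iff simp: norm_normalise split: if_splits)
    also have "\<dots> \<in> sets borel"
      by (intro sets.Diff measurable_sets[OF _ I]) auto
    finally show ?thesis .
  qed
  have DA_meas: "{w. w 0 \<in> A \<and> (\<forall>i\<in>{1..qq}. w i \<notin> A) \<and> (\<exists>i\<in>{qq + 1..<rr}. w i \<in> A)} \<in> sets M"
    if A: "A \<in> sets borel" for A :: "'a set" and qq rr
  proof -
    have "Measurable.pred M (\<lambda>w. w i \<in> A)" for i
      using measurable_sets[OF comp_meas A] space_eq by (simp add: Measurable.pred_def vimage_def)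
    note [measurable] = this
    have "Measurable.pred M (\<lambda>w. w 0 \<in> A \<and> (\<forall>i\<in>{1..qq}. w i \<notin> A) \<and> (\<exists>i\<in>{qq + 1..<rr}. w i \<in> A))"
      by measurable
    then show ?thesis by (rule sets_pred)
  qed
  have DE_meas: "DE n \<in> sets M" for n
  proof -
    have "DE n = {w. w 0 \<in> {y. x n < norm y} \<and> (\<forall>i\<in>{1..q n}. w i \<notin> {y. x n < norm y})
                      \<and> (\<exists>i\<in>{q n + 1..<r n}. w i \<in> {y. x n < norm y})}"
      unfolding DE_def by auto
    also have "\<dots> \<in> sets M"
    proof (rule DA_meas)
      have "Measurable.pred borel (\<lambda>y::'a. x n < norm y)" by measurable
      then show "{y::'a. x n < norm y} \<in> sets borel" unfolding Measurable.pred_def by simp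
    qed
    finally show ?thesis .
  qed
  have LD: "(\<lambda>n. real n * D n) \<longlonglongrightarrow> 0"
  proof -
    let ?A = "\<lambda>n. An1 (u n) 0 (\<lambda>_. Hs)"
    have "(\<lambda>n. real n * measure M (Aq (?A n) (q n) \<inter> Wint (q n + 1) (r n) (?A n))) \<longlonglongrightarrow> 0"
    proof -
      have "\<forall>(m::nat) (H :: nat \<Rightarrow> 'a set). (\<forall>j\<le>m. H j \<in> sets borel) \<longrightarrow>
        (\<lambda>n. real n * measure M (Aq (An1 (u n) m H) (q n) \<inter> Wint (q n + 1) (r n) (An1 (u n) m H))) \<longlonglongrightarrow> 0"
        using D' unfolding cond_D'_def r_def[abs_def] .
      from spec[OF spec[OF this, of 0], of "\<lambda>_. Hs"] Hs_borel show ?thesis by simp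
    qed
    moreover have "eventually (\<lambda>n. real n * measure M (Aq (?A n) (q n) \<inter> Wint (q n + 1) (r n) (?A n))
                      = real n * D n) sequentially"
      using equiv
    proof eventually_elim
      case (elim n)
      define AH where "AH = {y. normalise (u n) y \<in> Hs}"
      have e: "Aq (?A n) (q n) \<inter> Wint (q n + 1) (r n) (?A n) =
          {w. w 0 \<in> AH \<and> (\<forall>i\<in>{1..q n}. w i \<notin> AH) \<and> (\<exists>i\<in>{q n + 1..<r n}. w i \<in> AH)}"
        unfolding AH_def Aq_def Wint_def An1_def by (auto simp: shift_pow)
      have "measure M {w. w 0 \<in> AH \<and> (\<forall>i\<in>{1..q n}. w i \<notin> AH) \<and> (\<exists>i\<in>{q n + 1..<r n}. w i \<in> AH)}
            = measure M (DE n)"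
      proof (rule measure_eq_AE)
        show "AE w in M. (w \<in> {w. w 0 \<in> AH \<and> (\<forall>i\<in>{1..q n}. w i \<notin> AH) \<and> (\<exists>i\<in>{q n + 1..<r n}. w i \<in> AH)})
                 = (w \<in> DE n)"
          using elim by eventually_elim (auto simp: DE_def AH_def)
        show "{w. w 0 \<in> AH \<and> (\<forall>i\<in>{1..q n}. w i \<notin> AH) \<and> (\<exists>i\<in>{q n + 1..<r n}. w i \<in> AH)} \<in> sets M"
          unfolding AH_def by (intro DA_meas AH_borel)
        show "DE n \<in> sets M" by (rule DE_meas)
      qed
      then show ?case using e by (simp add: D_def)
    qed
    ultimately show ?thesis by (rule Lim_transform_eventually)
  qed

  have n_pos: "eventually (\<lambda>n. 0 < n) sequentially" by (rule eventually_gt_at_top)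
  have k_pos: "eventually (\<lambda>n. 0 < k n) sequentially"
  proof -
    have "eventually (\<lambda>n. 1 \<le> k n) sequentially" using k_lim unfolding filterlim_at_top by blast
    then show ?thesis by eventually_elim simp
  qed
  have r_pos: "eventually (\<lambda>n. 0 < r n) sequentially"
  proof -
    have "eventually (\<lambda>n. 1 \<le> n div k n) sequentially" using r_lim unfolding filterlim_at_top by blast
    then show ?thesis unfolding r_def by eventually_elim simp
  qed
  have t_pos: "eventually (\<lambda>n. 0 < t n) sequentially"
  proof -
    have "eventually (\<lambda>n. 1 \<le> t n) sequentially" using t_lim unfolding filterlim_at_top by blast
    then show ?thesis by eventually_elim simp
  qed
  have qr0: "(\<lambda>n. real (q n) / real (r n)) \<longlonglongrightarrow> 0"
    using smalloD_tendsto[OF q_small] unfolding r_def .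
  have qr: "eventually (\<lambda>n. q n < r n) sequentially"
    using order_tendstoD(2)[OF qr0 zero_less_one] r_pos
    by eventually_elim (auto simp: divide_less_eq)
  have bound: "eventually (\<lambda>n. \<bar>W n - real (r n) * Q n\<bar> \<le> real (q n) * U n + real (r n) * D n) sequentially"
    using qr
  proof eventually_elim
    case (elim n)
    show ?case using block_bound[OF elim, of "x n"] unfolding W_def Q_def U_def D_def DE_def .
  qed
  have kt0: "(\<lambda>n. real (k n * t n) / real n) \<longlonglongrightarrow> 0" using smalloD_tendsto[OF kt_small] .
  have kn0: "(\<lambda>n. real (k n) / real n) \<longlonglongrightarrow> 0"
  proof (rule Lim_null_comparison[OF _ kt0])
    show "eventually (\<lambda>n. norm (real (k n) / real n) \<le> real (k n * t n) / real n) sequentially"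
      using t_pos
    proof eventually_elim
      case (elim n)
      then have "k n * 1 \<le> k n * t n" by (intro mult_left_mono) auto
      then have "real (k n) \<le> real (k n * t n)" by (metis mult_1_right of_nat_le_iff)
      then show ?case by (simp add: divide_right_mono)
    qed
  qed
  have kr1: "(\<lambda>n. real (k n) * real (r n) / real n) \<longlonglongrightarrow> 1"
  proof (rule tendsto_sandwich)
    show "eventually (\<lambda>n. 1 - real (k n) / real n \<le> real (k n) * real (r n) / real n) sequentially"
      using n_pos k_pos
    proof eventually_elim
      case (elim n)
      have e: "real n = real (r n) * real (k n) + real (n mod k n)"
        unfolding r_def by (metis div_mult_mod_eq of_nat_add of_nat_mult)
      have "n mod k n < k n" using elim by simp
      then have le: "real n - real (k n) \<le> real (k n) * real (r n)" using e by simp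
      have "1 - real (k n) / real n = (real n - real (k n)) / real n" using elim by (simp add: field_simps)
      also have "\<dots> \<le> real (k n) * real (r n) / real n" using le by (intro divide_right_mono) auto
      finally show ?case .
    qed
    show "eventually (\<lambda>n. real (k n) * real (r n) / real n \<le> 1) sequentially"
      using n_pos
    proof eventually_elim
      case (elim n)
      have "k n * r n \<le> n" unfolding r_def by (simp add: mult.commute)
      then have "real (k n) * real (r n) \<le> real n" by (metis of_nat_le_iff of_nat_mult)
      then show ?case using elim by simp
    qed
    show "(\<lambda>n. 1 - real (k n) / real n) \<longlonglongrightarrow> 1" using tendsto_diff[OF tendsto_const kn0, of 1] by simp
  qed simp
  have main1: "(\<lambda>n. real (k n) * real (r n) * Q n) \<longlonglongrightarrow> \<theta> * \<tau>"
  proof -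
    have "(\<lambda>n. (real (k n) * real (r n) / real n) * (real n * U n) * (Q n / U n)) \<longlonglongrightarrow> 1 * \<tau> * \<theta>"
      by (intro tendsto_mult kr1 L1 L2)
    moreover have "eventually (\<lambda>n. (real (k n) * real (r n) / real n) * (real n * U n) * (Q n / U n)
                     = real (k n) * real (r n) * Q n) sequentially"
      using n_pos Upos by eventually_elim (auto simp: field_simps)
    ultimately show ?thesis by (auto intro: Lim_transform_eventually simp: mult.commute)
  qed
  have err: "(\<lambda>n. real (k n) * W n - real (k n) * real (r n) * Q n) \<longlonglongrightarrow> 0"
  proof (rule Lim_null_comparison)
    show "(\<lambda>n. (real (k n) * real (r n) / real n) * (real (q n) / real (r n)) * (real n * U n) + real n * D n)
            \<longlonglongrightarrow> 0"
      using tendsto_add[OF tendsto_mult[OF tendsto_mult[OF kr1 qr0] L1] LD] by simp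
    show "eventually (\<lambda>n. norm (real (k n) * W n - real (k n) * real (r n) * Q n)
            \<le> (real (k n) * real (r n) / real n) * (real (q n) / real (r n)) * (real n * U n) + real n * D n) sequentially"
      using n_pos k_pos r_pos bound
    proof eventually_elim
      case (elim n)
      have kr: "real (k n) * real (r n) \<le> real n"
      proof -
        have "k n * r n \<le> n" unfolding r_def by (simp add: mult.commute)
        then show ?thesis by (metis of_nat_le_iff of_nat_mult)
      qed
      have D0: "0 \<le> D n" unfolding D_def by simp
      have "norm (real (k n) * W n - real (k n) * real (r n) * Q n) = real (k n) * \<bar>W n - real (r n) * Q n\<bar>"
        by (simp add: abs_mult right_diff_distrib[symmetric] mult.assoc)
      also have "\<dots> \<le> real (k n) * (real (q n) * U n + real (r n) * D n)"
        using elim by (intro mult_left_mono) auto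
      also have "\<dots> = real (k n) * real (q n) * U n + (real (k n) * real (r n)) * D n"
        by (simp add: algebra_simps)
      also have "\<dots> \<le> real (k n) * real (q n) * U n + real n * D n"
        using kr D0 by (intro add_left_mono mult_right_mono) auto
      also have "real (k n) * real (q n) * U n = (real (k n) * real (r n) / real n) * (real (q n) / real (r n)) * (real n * U n)"
        using elim by (simp add: field_simps)
      finally show ?case .
    qed
  qed
  have conc1: "(\<lambda>n. real (k n) * W n) \<longlonglongrightarrow> \<theta> * \<tau>"
    using tendsto_add[OF main1 err] by simp
  have conc2: "(\<lambda>n. W n / (real (r n) * U n)) \<longlonglongrightarrow> \<theta>"
  proof -
    have "(\<lambda>n. (real (k n) * W n) / ((real (k n) * real (r n) / real n) * (real n * U n))) \<longlonglongrightarrow> (\<theta> * \<tau>) / (1 * \<tau>)"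
      using tau by (intro tendsto_divide conc1 tendsto_mult kr1 L1) auto
    moreover have "eventually (\<lambda>n. (real (k n) * W n) / ((real (k n) * real (r n) / real n) * (real n * U n))
                     = W n / (real (r n) * U n)) sequentially"
      using n_pos k_pos by eventually_elim (auto simp: field_simps)
    ultimately show ?thesis using tau by (auto dest: Lim_transform_eventually)
  qed
  show ?thesis using conc1 conc2 unfolding W_def U_def r_def x_def by simp
qed
end

theorem corollary3p5:
  fixes M :: "(nat \<Rightarrow> 'a::euclidean_space) measure"
    and u :: "nat \<Rightarrow> real \<Rightarrow> real"
    and k t q :: "nat \<Rightarrow> nat"
    and \<theta> :: real
  assumes prob: "prob_space M"
    and sets_M: "sets M = sets (\<Pi>\<^sub>M i\<in>(UNIV::nat set). (borel :: 'a measure))"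
    and stationary: "\<forall>A\<in>sets M. measure M (shift -` A \<inter> space M) = measure M A"
    and u_antimono: "\<forall>n s s'. 0 < s \<longrightarrow> s \<le> s' \<longrightarrow> u n s' \<le> u n s"
    and u_leftcont: "\<forall>n s. 0 < s \<longrightarrow> continuous (at_left s) (u n)"
    and u_full: "\<forall>n. ((\<lambda>(s1, s2). measure M {w. u n s2 < norm (w 0) \<and> norm (w 0) < u n s1})
                    \<longlongrightarrow> 1) (at_right 0 \<times>\<^sub>F at_top)"
    and u_norm: "\<forall>s>0. (\<lambda>n. real n * measure M (exceed (u n s))) \<longlonglongrightarrow> s"
    and k_lim: "filterlim k at_top sequentially"
    and t_lim: "filterlim t at_top sequentially"
    and r_lim: "filterlim (\<lambda>n. n div k n) at_top sequentially"
    and kt_small: "(\<lambda>n. real (k n * t n)) \<in> o(\<lambda>n. real n)"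
    and q_small: "(\<lambda>n. real (q n)) \<in> o(\<lambda>n. real (n div k n))"
    and extremal_index: "\<forall>s>0. (\<lambda>n. measure M (exceed_q (u n s) (q n)) / measure M (exceed (u n s)))
                             \<longlonglongrightarrow> \<theta>"
    and D': "cond_D' M u q (\<lambda>n. n div k n)"
    and tau: "0 < \<tau>"
  shows "(\<lambda>n. real (k n) * measure M (Wmax (n div k n) (u n \<tau>))) \<longlonglongrightarrow> \<theta> * \<tau>
       \<and> (\<lambda>n. measure M (Wmax (n div k n) (u n \<tau>))
               / (real (n div k n) * measure M (exceed (u n \<tau>)))) \<longlonglongrightarrow> \<theta>"
proof -
  interpret stat M
    using prob sets_M stationary by (simp add: stat_def stat_axioms_def)
  show ?thesis
    by (rule main[OF u_antimono u_leftcont u_full u_norm k_lim t_lim r_lim kt_small q_small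
          extremal_index D' tau])
qed

end
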